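(* Consider a Why Query with the \texttt{SUM} aggregate, an attribute $X$ with filters $p_1,\dots,p_m$, a threshold $\varepsilon$, a conciseness parameter $\sigma>0$, and a canonical predicate $P^C$. Then there exists an optimal explanation $P^*$ (a maximizer of $\rho_P-\sigma|P|$ over all $P\subseteq\{p_1,\dots,p_m\}$) with $P^*\subseteq P^C$.
   Context: $D$ is a finite table of rows; $M$ is a numerical column; $s_1,s_2$ are disjoint sets of rows (sibling subspaces). $X$ is a categorical column with values $x_1,\dots,x_m$; filter $p_i$ is the condition $X=x_i$. A predicate is $P\subseteq\{p_1,\dots,p_m\}$, $D_P$ the set of rows whose $X$-value is in $P$, $|P|$ its number of filters; $D'-D''$ is set difference. For $D'\subseteq D$, $\Delta(D')=\sum_{t\in D'\cap s_1}t[M]-\sum_{t\in D'\cap s_2}t[M]$; $\Delta_i=\Delta(D_{p_i})$; it is assumed $\Delta(D)>0$. $P$ is an actual cause if there is $\Gamma\subseteq\{p_1,\dots,p_m\}$, $\Gamma\cap P=\emptyset$ (valid contingency), with $\Delta(D-D_\Gamma-D_P)\le\varepsilon<\Delta(D-D_\Gamma)$. For an actual cause, $\rho_P=\frac{1}{1+\min_\Gamma|\Gamma|_W}$ over valid contingencies, with $|\Gamma|_W=\max\left(\frac{\Delta(D-D_P)-\Delta(D-D_P-D_\Gamma)}{\Delta(D)},0\right)$; otherwise $\rho_P=0$. Canonical predicate: order the filters so that $\Delta_1\ge\cdots\ge\Delta_m$ and let $j$ be such that $\Delta(D)-\sum_{i=1}^{j}\Delta_i\le\varepsilon<\Delta(D)-\sum_{i=1}^{j-1}\Delta_i$;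 then $P^C=\{p_1,\dots,p_j\}$. *)

theory Defs
  imports Complex_Main
begin

text \<open>A filter p_i (condition X = x_i) is identified with its value x_i, so the set of all
  filters is a finite set V of values and a predicate is a subset P of V.\<close>

definition Delta :: "('r \<Rightarrow> real) \<Rightarrow> 'r set \<Rightarrow> 'r set \<Rightarrow> 'r set \<Rightarrow> real" where
  "Delta M s1 s2 D' = (\<Sum>t\<in>D' \<inter> s1. M t) - (\<Sum>t\<in>D' \<inter> s2. M t)"

definition DP :: "('r \<Rightarrow> 'x) \<Rightarrow> 'r set \<Rightarrow> 'x set \<Rightarrow> 'r set" where
  "DP X D P = {t \<in> D. X t \<in> P}"

definition valid_contingency ::
  "'r set \<Rightarrow> ('r \<Rightarrow> real) \<Rightarrow> 'r set \<Rightarrow> 'r set \<Rightarrow> ('r \<Rightarrow> 'x) \<Rightarrow> 'x set \<Rightarrow> real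
    \<Rightarrow> 'x set \<Rightarrow> 'x set \<Rightarrow> bool" where
  "valid_contingency D M s1 s2 X V \<epsilon> P \<Gamma> \<longleftrightarrow>
     \<Gamma> \<subseteq> V \<and> \<Gamma> \<inter> P = {} \<and>
     Delta M s1 s2 (D - DP X D \<Gamma> - DP X D P) \<le> \<epsilon> \<and>
     \<epsilon> < Delta M s1 s2 (D - DP X D \<Gamma>)"

definition actual_cause ::
  "'r set \<Rightarrow> ('r \<Rightarrow> real) \<Rightarrow> 'r set \<Rightarrow> 'r set \<Rightarrow> ('r \<Rightarrow> 'x) \<Rightarrow> 'x set \<Rightarrow> real
    \<Rightarrow> 'x set \<Rightarrow> bool" where
  "actual_cause D M s1 s2 X V \<epsilon> P \<longleftrightarrow> (\<exists>\<Gamma>. valid_contingency D M s1 s2 X V \<epsilon> P \<Gamma>)"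

definition cont_weight ::
  "'r set \<Rightarrow> ('r \<Rightarrow> real) \<Rightarrow> 'r set \<Rightarrow> 'r set \<Rightarrow> ('r \<Rightarrow> 'x) \<Rightarrow> 'x set \<Rightarrow> 'x set \<Rightarrow> real" where
  "cont_weight D M s1 s2 X P \<Gamma> =
     max ((Delta M s1 s2 (D - DP X D P) - Delta M s1 s2 (D - DP X D P - DP X D \<Gamma>))
            / Delta M s1 s2 D) 0"

definition responsibility ::
  "'r set \<Rightarrow> ('r \<Rightarrow> real) \<Rightarrow> 'r set \<Rightarrow> 'r set \<Rightarrow> ('r \<Rightarrow> 'x) \<Rightarrow> 'x set \<Rightarrow> real
    \<Rightarrow> 'x set \<Rightarrow> real" where
  "responsibility D M s1 s2 X V \<epsilon> P =
     (if actual_cause D M s1 s2 X V \<epsilon> P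
      then 1 / (1 + Min {cont_weight D M s1 s2 X P \<Gamma> | \<Gamma>. valid_contingency D M s1 s2 X V \<epsilon> P \<Gamma>})
      else 0)"

text \<open>Canonical predicate: ord lists the filters in an order with non-increasing
  Delta_i, and j is the cut-off index (1 \<le> j \<le> m); P^C = set (take j ord).\<close>

definition canonical_predicate ::
  "'r set \<Rightarrow> ('r \<Rightarrow> real) \<Rightarrow> 'r set \<Rightarrow> 'r set \<Rightarrow> ('r \<Rightarrow> 'x) \<Rightarrow> 'x set \<Rightarrow> real
    \<Rightarrow> 'x list \<Rightarrow> nat \<Rightarrow> bool" where
  "canonical_predicate D M s1 s2 X V \<epsilon> ord j \<longleftrightarrow>
     distinct ord \<and> set ord = V \<and>
     sorted_wrt (\<lambda>a b. Delta M s1 s2 (DP X D {a}) \<ge> Delta M s1 s2 (DP X D {b})) ord \<and>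
     1 \<le> j \<and> j \<le> length ord \<and>
     Delta M s1 s2 D - (\<Sum>i<j. Delta M s1 s2 (DP X D {ord ! i})) \<le> \<epsilon> \<and>
     \<epsilon> < Delta M s1 s2 D - (\<Sum>i<j - 1. Delta M s1 s2 (DP X D {ord ! i}))"

end

theory Submission imports Defs begin

lemma delta_sum:
  assumes "finite A"
  shows "Delta M s1 s2 A = (\<Sum>t\<in>A. (if t \<in> s1 then M t else 0) - (if t \<in> s2 then M t else 0))"
proof -
  have a: "(\<Sum>t\<in>A \<inter> s1. M t) = (\<Sum>t\<in>A. if t \<in> s1 then M t else 0)"
    using sum.inter_restrict[OF assms, of M s1] by simp
  have b: "(\<Sum>t\<in>A \<inter> s2. M t) = (\<Sum>t\<in>A. if t \<in> s2 then M t else 0)"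
    using sum.inter_restrict[OF assms, of M s2] by simp
  show ?thesis unfolding Delta_def a b sum_subtractf ..
qed

lemma delta_diff:
  assumes "finite D" "A \<subseteq> D"
  shows "Delta M s1 s2 (D - A) = Delta M s1 s2 D - Delta M s1 s2 A"
  using assms by (simp add: delta_sum finite_subset sum_diff)

lemma delta_DP:
  assumes "finite D" "finite G"
  shows "Delta M s1 s2 (DP X D G) = (\<Sum>a\<in>G. Delta M s1 s2 (DP X D {a}))"
proof -
  define h where "h t = (if t \<in> s1 then M t else 0) - (if t \<in> s2 then M t else 0)" for t
  have fin: "finite (DP X D G)" using assms(1) unfolding DP_def by simp
  have "(\<Sum>a\<in>G. Delta M s1 s2 (DP X D {a})) = (\<Sum>a\<in>G. sum h {x \<in> DP X D G. X x = a})"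
  proof (rule sum.cong[OF refl])
    fix a assume "a \<in> G"
    then have "DP X D {a} = {x \<in> DP X D G. X x = a}" unfolding DP_def by auto
    moreover have "finite (DP X D {a})" using assms(1) unfolding DP_def by simp
    ultimately show "Delta M s1 s2 (DP X D {a}) = sum h {x \<in> DP X D G. X x = a}"
      by (simp add: delta_sum h_def)
  qed
  also have "\<dots> = sum h (DP X D G)"
    by (rule sum.group[OF fin assms(2)]) (auto simp: DP_def)
  finally show ?thesis using fin by (simp add: delta_sum h_def)
qed

lemma delta_rest:
  assumes "finite D" "finite G"
  shows "Delta M s1 s2 (D - DP X D G) = Delta M s1 s2 D - (\<Sum>a\<in>G. Delta M s1 s2 (DP X D {a}))"
proof -
  have "DP X D G \<subseteq> D" unfolding DP_def by auto
  then show ?thesis using assms by (simp only: delta_diff delta_DP[OF assms])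
qed

lemma valid_iff:
  assumes "finite D" "finite V" "P \<subseteq> V"
  shows "valid_contingency D M s1 s2 X V \<epsilon> P \<Gamma> \<longleftrightarrow>
    \<Gamma> \<subseteq> V \<and> \<Gamma> \<inter> P = {} \<and>
    Delta M s1 s2 D - (\<Sum>a\<in>\<Gamma>. Delta M s1 s2 (DP X D {a})) - (\<Sum>a\<in>P. Delta M s1 s2 (DP X D {a})) \<le> \<epsilon> \<and>
    \<epsilon> < Delta M s1 s2 D - (\<Sum>a\<in>\<Gamma>. Delta M s1 s2 (DP X D {a}))"
proof (cases "\<Gamma> \<subseteq> V \<and> \<Gamma> \<inter> P = {}")
  case True
  then have fG: "finite \<Gamma>" and fP: "finite P" using assms finite_subset by blast+
  have e: "D - DP X D \<Gamma> - DP X D P = D - DP X D (\<Gamma> \<union> P)" unfolding DP_def by auto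
  have "(\<Sum>a\<in>\<Gamma> \<union> P. Delta M s1 s2 (DP X D {a})) = (\<Sum>a\<in>\<Gamma>. Delta M s1 s2 (DP X D {a})) + (\<Sum>a\<in>P. Delta M s1 s2 (DP X D {a}))"
    using True fG fP by (simp add: sum.union_disjoint)
  then show ?thesis unfolding valid_contingency_def e
    using True fG fP assms(1) by (simp add: delta_rest algebra_simps)
qed (auto simp: valid_contingency_def)

lemma cw_eq:
  assumes "finite D" "finite V" "P \<subseteq> V" "\<Gamma> \<subseteq> V" "\<Gamma> \<inter> P = {}"
  shows "cont_weight D M s1 s2 X P \<Gamma> = max ((\<Sum>a\<in>\<Gamma>. Delta M s1 s2 (DP X D {a})) / Delta M s1 s2 D) 0"
proof -
  have fG: "finite \<Gamma>" and fP: "finite P" using assms finite_subset by blast+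
  have e: "D - DP X D P - DP X D \<Gamma> = D - DP X D (\<Gamma> \<union> P)" unfolding DP_def by auto
  have "(\<Sum>a\<in>\<Gamma> \<union> P. Delta M s1 s2 (DP X D {a})) = (\<Sum>a\<in>\<Gamma>. Delta M s1 s2 (DP X D {a})) + (\<Sum>a\<in>P. Delta M s1 s2 (DP X D {a}))"
    using assms fG fP by (simp add: sum.union_disjoint)
  then show ?thesis unfolding cont_weight_def e
    using fG fP assms(1) by (simp add: delta_rest)
qed

lemma resp_cases:
  assumes "finite V" "actual_cause D M s1 s2 X V \<epsilon> P"
  shows "\<exists>\<Gamma>. valid_contingency D M s1 s2 X V \<epsilon> P \<Gamma> \<and>
     responsibility D M s1 s2 X V \<epsilon> P = 1 / (1 + cont_weight D M s1 s2 X P \<Gamma>) \<and>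
     (\<forall>\<Gamma>'. valid_contingency D M s1 s2 X V \<epsilon> P \<Gamma>' \<longrightarrow> cont_weight D M s1 s2 X P \<Gamma> \<le> cont_weight D M s1 s2 X P \<Gamma>')"
proof -
  let ?W = "{cont_weight D M s1 s2 X P \<Gamma> | \<Gamma>. valid_contingency D M s1 s2 X V \<epsilon> P \<Gamma>}"
  have "?W \<subseteq> cont_weight D M s1 s2 X P ` Pow V" by (auto simp: valid_contingency_def)
  then have fin: "finite ?W" by (rule finite_subset) (use assms(1) in simp)
  have ne: "?W \<noteq> {}" using assms(2) unfolding actual_cause_def by blast
  have "Min ?W \<in> ?W" using fin ne by (rule Min_in)
  then obtain \<Gamma> where g: "valid_contingency D M s1 s2 X V \<epsilon> P \<Gamma>" "Min ?W = cont_weight D M s1 s2 X P \<Gamma>" by blast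
  show ?thesis
  proof (intro exI conjI allI impI)
    show "valid_contingency D M s1 s2 X V \<epsilon> P \<Gamma>" by (rule g(1))
    show "responsibility D M s1 s2 X V \<epsilon> P = 1 / (1 + cont_weight D M s1 s2 X P \<Gamma>)"
      unfolding responsibility_def by (simp only: if_P[OF assms(2)] g(2))
    fix \<Gamma>' assume "valid_contingency D M s1 s2 X V \<epsilon> P \<Gamma>'"
    then have "cont_weight D M s1 s2 X P \<Gamma>' \<in> ?W" by blast
    then have "Min ?W \<le> cont_weight D M s1 s2 X P \<Gamma>'" by (rule Min_le[OF fin])
    then show "cont_weight D M s1 s2 X P \<Gamma> \<le> cont_weight D M s1 s2 X P \<Gamma>'"
      by (simp only: g(2))
  qed
qed

lemma cw_nonneg: "cont_weight D M s1 s2 X P \<Gamma> \<ge> 0"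
  unfolding cont_weight_def by simp

lemma resp_nonneg:
  assumes "finite V"
  shows "responsibility D M s1 s2 X V \<epsilon> P \<ge> 0"
proof (cases "actual_cause D M s1 s2 X V \<epsilon> P")
  case True
  then obtain \<Gamma> where "responsibility D M s1 s2 X V \<epsilon> P = 1 / (1 + cont_weight D M s1 s2 X P \<Gamma>)"
    using resp_cases[OF assms] by blast
  then show ?thesis using cw_nonneg[of D M s1 s2 X P \<Gamma>] by simp
qed (simp add: responsibility_def)

lemma resp_mono:
  assumes fin: "finite V"
    and H: "\<And>\<Gamma>. valid_contingency D M s1 s2 X V \<epsilon> P \<Gamma> \<Longrightarrow>
       \<exists>\<Gamma>'. valid_contingency D M s1 s2 X V \<epsilon> P' \<Gamma>' \<and> cont_weight D M s1 s2 X P' \<Gamma>' \<le> cont_weight D M s1 s2 X P \<Gamma>"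
  shows "responsibility D M s1 s2 X V \<epsilon> P \<le> responsibility D M s1 s2 X V \<epsilon> P'"
proof (cases "actual_cause D M s1 s2 X V \<epsilon> P")
  case True
  then obtain \<Gamma> where g: "valid_contingency D M s1 s2 X V \<epsilon> P \<Gamma>"
    "responsibility D M s1 s2 X V \<epsilon> P = 1 / (1 + cont_weight D M s1 s2 X P \<Gamma>)"
    using resp_cases[OF fin] by blast
  obtain \<Gamma>' where g': "valid_contingency D M s1 s2 X V \<epsilon> P' \<Gamma>'"
    "cont_weight D M s1 s2 X P' \<Gamma>' \<le> cont_weight D M s1 s2 X P \<Gamma>" using H[OF g(1)] by blast
  then have "actual_cause D M s1 s2 X V \<epsilon> P'" unfolding actual_cause_def by blast
  then obtain \<Gamma>0 where g0: "responsibility D M s1 s2 X V \<epsilon> P' = 1 / (1 + cont_weight D M s1 s2 X P' \<Gamma>0)"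
    "cont_weight D M s1 s2 X P' \<Gamma>0 \<le> cont_weight D M s1 s2 X P' \<Gamma>'"
    using resp_cases[OF fin] g'(1) by blast
  have "cont_weight D M s1 s2 X P' \<Gamma>0 \<le> cont_weight D M s1 s2 X P \<Gamma>" using g0(2) g'(2) by linarith
  moreover have "0 \<le> cont_weight D M s1 s2 X P' \<Gamma>0" by (rule cw_nonneg)
  ultimately show ?thesis unfolding g(2) g0(1) by (simp add: frac_le)
next
  case False
  then have "responsibility D M s1 s2 X V \<epsilon> P = 0" by (simp add: responsibility_def)
  then show ?thesis using resp_nonneg[OF fin, of D M s1 s2 X \<epsilon> P'] by simp
qed

lemma sum_ge_card:
  fixes d :: "'x \<Rightarrow> real"
  assumes "finite A" "finite B" "card A = card B" "\<And>x y. x \<in> A \<Longrightarrow> y \<in> B \<Longrightarrow> d y \<le> d x"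
  shows "sum d B \<le> sum d A"
proof (cases "A = {}")
  case True
  then have "B = {}" using assms by simp
  then show ?thesis using True by simp
next
  case False
  define c where "c = Min (d ` A)"
  have c1: "\<And>x. x \<in> A \<Longrightarrow> c \<le> d x" unfolding c_def using assms(1) by simp
  have c2: "\<And>y. y \<in> B \<Longrightarrow> d y \<le> c"
  proof -
    fix y assume "y \<in> B"
    have "c \<in> d ` A" unfolding c_def using assms(1) False by simp
    then show "d y \<le> c" using assms(4) \<open>y \<in> B\<close> by blast
  qed
  have "sum d B \<le> of_nat (card B) * c" using sum_bounded_above[of B d c] c2 by simp
  also have "\<dots> = of_nat (card A) * c" using assms(3) by simp
  also have "\<dots> \<le> sum d A" using sum_bounded_below[of A c d] c1 by simp
  finally show ?thesis .
qed

lemma top_ge: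
  fixes d :: "'x \<Rightarrow> real"
  assumes "sorted_wrt (\<lambda>a b. d a \<ge> d b) ord"
    and "x \<in> set (take k ord)" "y \<in> set ord" "y \<notin> set (take k ord)"
  shows "d y \<le> d x"
proof -
  obtain i where i: "i < length (take k ord)" "take k ord ! i = x" using assms(2) by (auto simp: in_set_conv_nth)
  obtain l where l: "l < length ord" "ord ! l = y" using assms(3) by (auto simp: in_set_conv_nth)
  have "\<not> l < k"
  proof
    assume "l < k"
    then have "take k ord ! l = y" "l < length (take k ord)" using l by auto
    then show False using assms(4) by (metis nth_mem)
  qed
  then have "i < l" using i by simp
  then have "d (ord ! i) \<ge> d (ord ! l)" using sorted_wrt_nth_less[OF assms(1) _ l(1)] by blast
  then show ?thesis using i l by simp
qed

lemma exchange:
  fixes d :: "'x \<Rightarrow> real"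
  assumes dist: "distinct ord" and srt: "sorted_wrt (\<lambda>a b. d a \<ge> d b) ord"
    and V: "set ord = V" and PV: "P \<subseteq> V" and cP: "card P = k" and kl: "k \<le> length ord"
    and GV: "\<Gamma> \<subseteq> V" and GP: "\<Gamma> \<inter> P = {}"
  shows "\<exists>\<Gamma>'. \<Gamma>' \<subseteq> V \<and> \<Gamma>' \<inter> set (take k ord) = {} \<and> sum d \<Gamma>' \<le> sum d \<Gamma> \<and>
      sum d \<Gamma> + sum d P \<le> sum d \<Gamma>' + sum d (set (take k ord))"
proof -
  define Q where "Q = set (take k ord)"
  have fV: "finite V" using V by auto
  have QV: "Q \<subseteq> V" unfolding Q_def using V set_take_subset by metis
  have fQ: "finite Q" "finite P" "finite \<Gamma>" using fV QV PV GV finite_subset by blast+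
  have cQ: "card Q = k" unfolding Q_def using dist kl by (simp add: distinct_card)
  have ge: "\<And>x y. x \<in> Q \<Longrightarrow> y \<in> V - Q \<Longrightarrow> d y \<le> d x"
    using top_ge[OF srt] V unfolding Q_def by blast
  define A where "A = \<Gamma> \<inter> Q"
  define B where "B = P - Q"
  have cQP: "card (Q - P) = card B"
  proof -
    have "card (Q - P) = card Q - card (Q \<inter> P)" using fQ by (simp add: card_Diff_subset_Int)
    moreover have "card (P - Q) = card P - card (P \<inter> Q)" using fQ by (simp add: card_Diff_subset_Int)
    ultimately show ?thesis unfolding B_def using cQ cP by (simp add: Int_commute)
  qed
  have AQP: "A \<subseteq> Q - P" unfolding A_def using GP by auto
  have fA: "finite A" "finite B" unfolding A_def B_def using fQ by auto
  have "card A \<le> card (Q - P)" using AQP fQ by (simp add: card_mono)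
  then have "card A \<le> card B" using cQP by simp
  then obtain B' where B': "B' \<subseteq> B" "card B' = card A" "finite B'" by (metis obtain_subset_with_card_n)
  define \<Gamma>' where "\<Gamma>' = (\<Gamma> - A) \<union> B'"
  define R where "R = (Q - P) - A"
  define E where "E = B - B'"
  have fRE: "finite R" "finite E" unfolding R_def E_def using fQ fA by auto
  have cRE: "card R = card E"
  proof -
    have "card R = card (Q - P) - card A" unfolding R_def using AQP fQ by (simp add: card_Diff_subset finite_subset)
    moreover have "card E = card B - card B'" unfolding E_def using B' by (simp add: card_Diff_subset)
    ultimately show ?thesis using cQP B' by simp
  qed
  have sBA: "sum d B' \<le> sum d A"
    by (rule sum_ge_card[OF fA(1) B'(3) B'(2)[symmetric]])
       (use ge B' PV in \<open>auto simp: A_def B_def\<close>)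
  have sER: "sum d E \<le> sum d R"
    by (rule sum_ge_card[OF fRE cRE])
       (use ge B' PV in \<open>auto simp: R_def E_def B_def\<close>)
  have e1: "sum d \<Gamma> = sum d (\<Gamma> - A) + sum d A"
    using sum.subset_diff[of A \<Gamma> d] fQ unfolding A_def by auto
  have e2: "sum d \<Gamma>' = sum d (\<Gamma> - A) + sum d B'"
    unfolding \<Gamma>'_def using B' GP fQ unfolding B_def by (subst sum.union_disjoint) auto
  have e3: "sum d Q = sum d (Q \<inter> P) + sum d (Q - P)"
    using sum.subset_diff[of "Q \<inter> P" Q d] fQ by (simp add: Diff_Int)
  have e4: "sum d (Q - P) = sum d R + sum d A"
    using sum.subset_diff[of A "Q - P" d] fQ AQP unfolding R_def by auto
  have e5: "sum d P = sum d (Q \<inter> P) + sum d B"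
    using sum.subset_diff[of "Q \<inter> P" P d] fQ unfolding B_def by (simp add: Diff_Int Int_commute)
  have e6: "sum d B = sum d E + sum d B'"
    using sum.subset_diff[of B' B d] fA B' unfolding E_def by auto
  show ?thesis
  proof (intro exI conjI)
    show "\<Gamma>' \<subseteq> V" unfolding \<Gamma>'_def using GV B' PV unfolding B_def by auto
    show "\<Gamma>' \<inter> set (take k ord) = {}" unfolding \<Gamma>'_def Q_def[symmetric] using B' unfolding A_def B_def by auto
    show "sum d \<Gamma>' \<le> sum d \<Gamma>" using e1 e2 sBA by linarith
    show "sum d \<Gamma> + sum d P \<le> sum d \<Gamma>' + sum d (set (take k ord))"
      unfolding Q_def[symmetric] using e1 e2 e3 e4 e5 e6 sER by linarith
  qed
qed

theorem proposition3p16: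
  fixes D s1 s2 :: "'r set" and M :: "'r \<Rightarrow> real" and X :: "'r \<Rightarrow> 'x"
    and V :: "'x set" and \<epsilon> \<sigma> :: real and ord :: "'x list" and j :: nat
  assumes "finite D"
    and "s1 \<inter> s2 = {}"
    and "finite V"
    and "\<forall>t\<in>D. X t \<in> V"
    and "Delta M s1 s2 D > 0"
    and "\<sigma> > 0"
    and "canonical_predicate D M s1 s2 X V \<epsilon> ord j"
  shows "\<exists>Pstar. Pstar \<subseteq> set (take j ord) \<and>
           (\<forall>P. P \<subseteq> V \<longrightarrow>
              responsibility D M s1 s2 X V \<epsilon> P - \<sigma> * real (card P)
                \<le> responsibility D M s1 s2 X V \<epsilon> Pstar - \<sigma> * real (card Pstar))"
proof -
  note fD = assms(1) and fV = assms(3) and Tpos = assms(5) and sig = assms(6)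
  define d where "d a = Delta M s1 s2 (DP X D {a})" for a
  define T where "T = Delta M s1 s2 D"
  have canon: "distinct ord \<and> set ord = V \<and>
     sorted_wrt (\<lambda>a b. d a \<ge> d b) ord \<and>
     1 \<le> j \<and> j \<le> length ord \<and>
     T - (\<Sum>i<j. d (ord ! i)) \<le> \<epsilon> \<and>
     \<epsilon> < T - (\<Sum>i<j - 1. d (ord ! i))"
    using assms(7) unfolding canonical_predicate_def d_def T_def .
  then have dist: "distinct ord" and V: "set ord = V"
    and srt: "sorted_wrt (\<lambda>a b. d a \<ge> d b) ord"
    and j1: "1 \<le> j" and jl: "j \<le> length ord"
    and c1: "T - (\<Sum>i<j. d (ord ! i)) \<le> \<epsilon>"
    and c2: "\<epsilon> < T - (\<Sum>i<j - 1. d (ord ! i))"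
    by auto
  have sumC: "sum d (set (take n ord)) = (\<Sum>i<n. d (ord ! i))" if "n \<le> length ord" for n
  proof -
    have "set (take n ord) = (!) ord ` {..<n}" using nth_image[OF that] by (simp add: atLeast0LessThan)
    moreover have "inj_on ((!) ord) {..<n}" using dist that by (simp add: inj_on_nth)
    ultimately show ?thesis by (simp add: sum.reindex)
  qed
  have vi: "\<And>P \<Gamma>. P \<subseteq> V \<Longrightarrow> valid_contingency D M s1 s2 X V \<epsilon> P \<Gamma> \<longleftrightarrow>
      \<Gamma> \<subseteq> V \<and> \<Gamma> \<inter> P = {} \<and> T - sum d \<Gamma> - sum d P \<le> \<epsilon> \<and> \<epsilon> < T - sum d \<Gamma>"
    using valid_iff[OF fD fV] unfolding d_def T_def by blast
  have cw: "\<And>P \<Gamma>. P \<subseteq> V \<Longrightarrow> \<Gamma> \<subseteq> V \<Longrightarrow> \<Gamma> \<inter> P = {} \<Longrightarrow>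
      cont_weight D M s1 s2 X P \<Gamma> = max (sum d \<Gamma> / T) 0"
    using cw_eq[OF fD fV] unfolding d_def T_def by blast
  define C where "C = set (take j ord)"
  have CV: "C \<subseteq> V" unfolding C_def using V set_take_subset by metis
  have cC: "card C = j" unfolding C_def using dist jl by (simp add: distinct_card)
  have epsT: "\<epsilon> < T"
  proof -
    obtain j' where j': "j = Suc j'" using j1 by (cases j) auto
    have "(\<Sum>i<j'. d (ord ! i)) < (\<Sum>i<j. d (ord ! i))" using c1 c2 j' by simp
    then have pos: "d (ord ! j') > 0" using j' by simp
    have "\<forall>i\<in>{..<j'}. 0 \<le> d (ord ! i)"
    proof
      fix i assume "i \<in> {..<j'}"
      then have "d (ord ! i) \<ge> d (ord ! j')" using sorted_wrt_nth_less[OF srt, of i j'] j' jl by simp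
      then show "0 \<le> d (ord ! i)" using pos by simp
    qed
    then have "0 \<le> (\<Sum>i<j'. d (ord ! i))" by (meson sum_nonneg)
    then show ?thesis using c2 j' by simp
  qed
  define F where "F P = responsibility D M s1 s2 X V \<epsilon> P - \<sigma> * real (card P)" for P
  have key: "\<exists>Q. Q \<subseteq> C \<and> F P \<le> F Q" if PV: "P \<subseteq> V" for P
  proof (cases "card P \<le> j")
    case True
    define k where "k = card P"
    define Q where "Q = set (take k ord)"
    have kl: "k \<le> length ord" using True jl k_def by simp
    have QC: "Q \<subseteq> C" unfolding Q_def C_def using True k_def by (simp add: set_take_subset_set_take)
    have QV: "Q \<subseteq> V" using QC CV by blast
    have cQ: "card Q = k" unfolding Q_def using dist kl by (simp add: distinct_card)
    have "responsibility D M s1 s2 X V \<epsilon> P \<le> responsibility D M s1 s2 X V \<epsilon> Q"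
    proof (rule resp_mono[OF fV])
      fix \<Gamma> assume "valid_contingency D M s1 s2 X V \<epsilon> P \<Gamma>"
      then have g: "\<Gamma> \<subseteq> V" "\<Gamma> \<inter> P = {}" "T - sum d \<Gamma> - sum d P \<le> \<epsilon>" "\<epsilon> < T - sum d \<Gamma>"
        using vi[OF PV] by auto
      obtain \<Gamma>' where g': "\<Gamma>' \<subseteq> V" "\<Gamma>' \<inter> Q = {}" "sum d \<Gamma>' \<le> sum d \<Gamma>"
        "sum d \<Gamma> + sum d P \<le> sum d \<Gamma>' + sum d Q"
        using exchange[OF dist srt V PV k_def[symmetric] kl g(1) g(2)] unfolding Q_def by blast
      have "valid_contingency D M s1 s2 X V \<epsilon> Q \<Gamma>'" using vi[OF QV] g g' by auto
      moreover have "cont_weight D M s1 s2 X Q \<Gamma>' \<le> cont_weight D M s1 s2 X P \<Gamma>"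
      proof -
        have "sum d \<Gamma>' / T \<le> sum d \<Gamma> / T" using g'(3) Tpos unfolding T_def by (simp add: divide_right_mono)
        then show ?thesis using cw[OF QV g'(1) g'(2)] cw[OF PV g(1) g(2)] by simp
      qed
      ultimately show "\<exists>\<Gamma>'. valid_contingency D M s1 s2 X V \<epsilon> Q \<Gamma>' \<and>
          cont_weight D M s1 s2 X Q \<Gamma>' \<le> cont_weight D M s1 s2 X P \<Gamma>" by blast
    qed
    then have "F P \<le> F Q" unfolding F_def using cQ k_def by simp
    then show ?thesis using QC by blast
  next
    case False
    have "responsibility D M s1 s2 X V \<epsilon> P \<le> responsibility D M s1 s2 X V \<epsilon> C"
    proof (rule resp_mono[OF fV])
      fix \<Gamma> assume "valid_contingency D M s1 s2 X V \<epsilon> P \<Gamma>"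
      then have g: "\<Gamma> \<subseteq> V" "\<Gamma> \<inter> P = {}" using vi[OF PV] by auto
      have "valid_contingency D M s1 s2 X V \<epsilon> C {}" using vi[OF CV] c1 epsT sumC[OF jl] unfolding C_def by simp
      moreover have "cont_weight D M s1 s2 X C {} \<le> cont_weight D M s1 s2 X P \<Gamma>"
        using cw[OF CV, of "{}"] cw_nonneg[of D M s1 s2 X P \<Gamma>] by simp
      ultimately show "\<exists>\<Gamma>'. valid_contingency D M s1 s2 X V \<epsilon> C \<Gamma>' \<and>
          cont_weight D M s1 s2 X C \<Gamma>' \<le> cont_weight D M s1 s2 X P \<Gamma>" by blast
    qed
    moreover have "\<sigma> * real j \<le> \<sigma> * real (card P)" using False sig by simp
    ultimately have "F P \<le> F C" unfolding F_def using cC by simp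
    then show ?thesis by blast
  qed
  have fC: "finite (F ` Pow C)" using CV fV by (simp add: finite_subset)
  have "Max (F ` Pow C) \<in> F ` Pow C" using fC by (intro Max_in) auto
  then obtain Ps where Ps: "Ps \<subseteq> C" "F Ps = Max (F ` Pow C)" by auto
  show ?thesis
  proof (intro exI conjI allI impI)
    show "Ps \<subseteq> set (take j ord)" using Ps C_def by simp
    fix P assume "P \<subseteq> V"
    then obtain Q where "Q \<subseteq> C" "F P \<le> F Q" using key by blast
    moreover have "F Q \<le> F Ps" using Ps fC \<open>Q \<subseteq> C\<close> by (metis Max_ge Pow_iff imageI)
    ultimately show "responsibility D M s1 s2 X V \<epsilon> P - \<sigma> * real (card P)
                \<le> responsibility D M s1 s2 X V \<epsilon> Ps - \<sigma> * real (card Ps)" unfolding F_def by linarith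
  qed
qed

end
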